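(* Consider two groups of binary agents and the round-robin procedure in which, while goods remain, group $1$ picks one remaining good and then group $2$ picks one remaining good. Then: (a) group $1$ has a picking strategy such that, whatever goods group $2$ picks, the final allocation is envy-free for at least half of the agents of group $1$; (b) group $2$ has a picking strategy such that, whatever goods group $1$ picks, the final allocation is EF1 (equivalently, MMS-fair) for at least half of the agents of group $2$.
   Context: There is a finite set $G$ of goods and two groups $A_1,A_2$ of agents. A binary agent has an additive utility with $u_a(\{g\})\in\{0,1\}$. The round-robin procedure produces a partition $(G_1,G_2)$ of $G$, $G_i$ being the goods picked by group $i$; agents of $A_i$ get $u_a(G_i)$. For $a\in A_i$ the allocation is envy-free for $a$ if $u_a(G_i)\ge u_a(G_{3-i})$, and EF1 for $a$ if there is $C\subseteq G_{3-i}$, $|C|\le1$, with $u_a(G_i)\ge u_a(G_{3-i}\setminus C)$. It is MMS-fair for $a$ if $u_a(G_i)\ge\max\min(u_a(P_1),u_a(P_2))$ over all partitions $(P_1,P_2)$ of $G$. *)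

theory Defs
  imports Main
begin

definition uset :: "('a \<Rightarrow> 'g \<Rightarrow> nat) \<Rightarrow> 'a \<Rightarrow> 'g set \<Rightarrow> nat" where
  "uset u a S = (\<Sum>g\<in>S. u a g)"

definition binary_agents :: "('a \<Rightarrow> 'g \<Rightarrow> nat) \<Rightarrow> 'a set \<Rightarrow> bool" where
  "binary_agents u A \<longleftrightarrow> (\<forall>a\<in>A. \<forall>g. u a g \<le> 1)"

text \<open>A play of the round-robin procedure is a list of the picked goods in order;
  positions 0,2,4,... are picks of group 1 and positions 1,3,5,... of group 2.
  A complete play picks every good exactly once.\<close>
definition complete_play :: "'g set \<Rightarrow> 'g list \<Rightarrow> bool" where
  "complete_play G p \<longleftrightarrow> distinct p \<and> set p = G"

definition picked_by1 :: "'g list \<Rightarrow> 'g set" where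
  "picked_by1 p = {p ! i | i. i < length p \<and> even i}"

definition picked_by2 :: "'g list \<Rightarrow> 'g set" where
  "picked_by2 p = {p ! i | i. i < length p \<and> odd i}"

text \<open>A strategy of group 1 acts on histories of even length, one of group 2 on histories of odd
  length; it is valid if it always picks a remaining good.\<close>
definition valid_strategy :: "'g set \<Rightarrow> (nat \<Rightarrow> bool) \<Rightarrow> ('g list \<Rightarrow> 'g) \<Rightarrow> bool" where
  "valid_strategy G turn s \<longleftrightarrow>
     (\<forall>h. distinct h \<and> set h \<subset> G \<and> turn (length h) \<longrightarrow> s h \<in> G - set h)"

definition follows :: "(nat \<Rightarrow> bool) \<Rightarrow> ('g list \<Rightarrow> 'g) \<Rightarrow> 'g list \<Rightarrow> bool" where
  "follows turn s p \<longleftrightarrow> (\<forall>i < length p. turn i \<longrightarrow> p ! i = s (take i p))"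

definition envy_free_for :: "('a \<Rightarrow> 'g \<Rightarrow> nat) \<Rightarrow> 'a \<Rightarrow> 'g set \<Rightarrow> 'g set \<Rightarrow> bool" where
  "envy_free_for u a Own Other \<longleftrightarrow> uset u a Own \<ge> uset u a Other"

definition EF1_for :: "('a \<Rightarrow> 'g \<Rightarrow> nat) \<Rightarrow> 'a \<Rightarrow> 'g set \<Rightarrow> 'g set \<Rightarrow> bool" where
  "EF1_for u a Own Other \<longleftrightarrow>
     (\<exists>C. C \<subseteq> Other \<and> card C \<le> 1 \<and> uset u a Own \<ge> uset u a (Other - C))"

definition MMS_value :: "('a \<Rightarrow> 'g \<Rightarrow> nat) \<Rightarrow> 'a \<Rightarrow> 'g set \<Rightarrow> nat" where
  "MMS_value u a G = Max {min (uset u a P1) (uset u a P2) | P1 P2. P1 \<union> P2 = G \<and> P1 \<inter> P2 = {}}"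

definition MMS_fair_for :: "('a \<Rightarrow> 'g \<Rightarrow> nat) \<Rightarrow> 'a \<Rightarrow> 'g set \<Rightarrow> 'g set \<Rightarrow> bool" where
  "MMS_fair_for u a G Own \<longleftrightarrow> uset u a Own \<ge> MMS_value u a G"

end

theory Submission
  imports Defs
begin

inductive F :: "('g set \<Rightarrow> 'g set \<Rightarrow> bool) \<Rightarrow> 'g set \<Rightarrow> 'g set \<Rightarrow> 'g set \<Rightarrow> bool \<Rightarrow> bool"
  for P where
  fin: "P X Y \<Longrightarrow> F P {} X Y b"
| mv: "g \<in> R \<Longrightarrow> F P (R - {g}) (insert g X) Y False \<Longrightarrow> F P R X Y True"
| op: "R \<noteq> {} \<Longrightarrow> (\<And>g. g \<in> R \<Longrightarrow> F P (R - {g}) X (insert g Y) True) \<Longrightarrow> F P R X Y False"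

lemma F_empty: "F P {} X Y b \<Longrightarrow> P X Y"
  by (erule F.cases) auto

lemma F_True: "F P R X Y True \<Longrightarrow> R \<noteq> {} \<Longrightarrow> \<exists>g\<in>R. F P (R - {g}) (insert g X) Y False"
  by (erule F.cases) auto

lemma F_False: "F P R X Y False \<Longrightarrow> R \<noteq> {} \<Longrightarrow> \<forall>g\<in>R. F P (R - {g}) X (insert g Y) True"
  by (erule F.cases) auto

lemma F_final: "F P R X Y b \<Longrightarrow> \<exists>E1 E2. E1 \<subseteq> R \<and> E2 \<subseteq> R \<and> P (X \<union> E1) (Y \<union> E2)"
proof (induction rule: F.induct)
  case (fin X Y b) then show ?case by auto
next
  case (mv g R X Y)
  then obtain E1 E2 where h: "E1 \<subseteq> R - {g}" "E2 \<subseteq> R - {g}" "P (insert g X \<union> E1) (Y \<union> E2)" by blast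
  have "insert g X \<union> E1 = X \<union> insert g E1" by blast
  then have "insert g E1 \<subseteq> R \<and> E2 \<subseteq> R \<and> P (X \<union> insert g E1) (Y \<union> E2)" using h mv(1) by auto
  then show ?case by blast
next
  case (op R X Y)
  then obtain g where g: "g \<in> R" by blast
  have "\<exists>E1 E2. E1 \<subseteq> R - {g} \<and> E2 \<subseteq> R - {g} \<and> P (X \<union> E1) (insert g Y \<union> E2)" using op.IH[OF g] .
  then obtain E1 E2 where h: "E1 \<subseteq> R - {g}" "E2 \<subseteq> R - {g}" "P (X \<union> E1) (insert g Y \<union> E2)" by blast
  have "insert g Y \<union> E2 = Y \<union> insert g E2" by blast
  then have "E1 \<subseteq> R \<and> insert g E2 \<subseteq> R \<and> P (X \<union> E1) (Y \<union> insert g E2)" using h g by auto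
  then show ?case by blast
qed

lemma F_mono: "F P R X Y b \<Longrightarrow> (\<And>X Y. P X Y \<Longrightarrow> P' X Y) \<Longrightarrow> F P' R X Y b"
  apply (induction rule: F.induct)
    apply (rule F.fin, simp)
   apply (rule F.mv, assumption, simp)
  apply (rule F.op, auto)
  done

lemma F_det: "finite R \<Longrightarrow> F P R X Y b \<or> F (\<lambda>y x. \<not> P x y) R Y X (\<not> b)"
proof (induct R arbitrary: X Y b rule: finite_psubset_induct)
  case (psubset R)
  show ?case
  proof (cases "R = {}")
    case True
    then show ?thesis by (auto intro: F.fin)
  next
    case ne: False
    have IH: "\<And>g X Y b. g \<in> R \<Longrightarrow> F P (R - {g}) X Y b \<or> F (\<lambda>y x. \<not> P x y) (R - {g}) Y X (\<not> b)"
      using psubset by blast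
    show ?thesis
    proof (cases b)
      case True
      show ?thesis
      proof (cases "\<exists>g\<in>R. F P (R - {g}) (insert g X) Y False")
        case True
        then obtain g where "g \<in> R" "F P (R - {g}) (insert g X) Y False" by blast
        then have "F P R X Y True" by (rule F.mv)
        then show ?thesis using \<open>b\<close> by simp
      next
        case False
        then have "\<forall>g\<in>R. F (\<lambda>y x. \<not> P x y) (R - {g}) Y (insert g X) True"
          using IH by fastforce
        then have "F (\<lambda>y x. \<not> P x y) R Y X False" using ne by (intro F.op) auto
        then show ?thesis using \<open>b\<close> by simp
      qed
    next
      case False
      show ?thesis
      proof (cases "\<forall>g\<in>R. F P (R - {g}) X (insert g Y) True")
        case True
        then have "F P R X Y False" using ne by (intro F.op) auto
        then show ?thesis using \<open>\<not>b\<close> by simp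
      next
        case c: False
        then obtain g where g: "g \<in> R" "\<not> F P (R - {g}) X (insert g Y) True" by blast
        then have "F (\<lambda>y x. \<not> P x y) (R - {g}) (insert g Y) X False" using IH[of g X "insert g Y" True] by auto
        then have "F (\<lambda>y x. \<not> P x y) R Y X True" using g by (intro F.mv)
        then show ?thesis using \<open>\<not>b\<close> by simp
      qed
    qed
  qed
qed

lemma F_combine: "F P R X Y b \<Longrightarrow> F Q R Y X (\<not> b) \<Longrightarrow> \<exists>X' Y'. P X' Y' \<and> Q Y' X'"
proof (induction arbitrary: rule: F.induct)
  case (fin X Y b)
  then show ?case using F_empty by blast
next
  case (mv g R X Y)
  then have "F Q (R - {g}) Y (insert g X) True" using F_False[of Q R Y X] by auto
  then show ?case using mv by auto
next
  case (op R X Y)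
  then obtain g where "g \<in> R" "F Q (R - {g}) (insert g Y) X False" using F_True[of Q R Y X] by auto
  then show ?case using op by auto
qed

lemma F_extra:
  assumes "F P R' X Y b"
    and mono: "\<And>X Y X' Y'. P X Y \<Longrightarrow> X \<subseteq> X' \<Longrightarrow> finite X' \<Longrightarrow> Y' \<subseteq> Y \<Longrightarrow> finite Y \<Longrightarrow> P X' Y'"
  shows "R' = R \<union> E \<Longrightarrow> R \<inter> E = {} \<Longrightarrow> finite R' \<Longrightarrow> finite X \<Longrightarrow> finite Y \<Longrightarrow> F P R (X \<union> E) Y b"
  using assms(1)
proof (induction arbitrary: R E rule: F.induct)
  case (fin X Y b)
  then have "R = {}" "E = {}" by auto
  then show ?case using fin.hyps by (simp add: F.fin)
next
  case (mv g R' X Y)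
  note pr = mv.prems
  show ?case
  proof (cases "R = {}")
    case True
    have FF: "F P R' X Y True" using mv.hyps by (rule F.mv)
    from F_final[OF FF] obtain E1 E2 where
      e: "E1 \<subseteq> R'" "E2 \<subseteq> R'" "P (X \<union> E1) (Y \<union> E2)" by blast
    have "X \<union> E1 \<subseteq> X \<union> E" using e(1) pr(1) True by blast
    moreover have "finite (X \<union> E)" using pr by simp
    moreover have "finite (Y \<union> E2)" using pr e(2) finite_subset by blast
    ultimately have "P (X \<union> E) Y" using mono[OF e(3)] by blast
    then show ?thesis using True by (simp add: F.fin)
  next
    case ne: False
    show ?thesis
    proof (cases "g \<in> R")
      case True
      have a1: "R' - {g} = (R - {g}) \<union> E" using pr(1,2) True by blast
      have a2: "(R - {g}) \<inter> E = {}" using pr(2) by blast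
      have "F P (R - {g}) (insert g X \<union> E) Y False"
        using mv.IH[OF a1 a2] pr by simp
      then have "F P (R - {g}) (insert g (X \<union> E)) Y False" by simp
      then show ?thesis using True by (rule F.mv[rotated])
    next
      case False
      then have gE: "g \<in> E" using mv.hyps(1) pr(1) by blast
      obtain y where y: "y \<in> R" using ne by blast
      have a1: "R' - {g} = (R - {y}) \<union> (E - {g} \<union> {y})" using pr(1,2) gE y by blast
      have a2: "(R - {y}) \<inter> (E - {g} \<union> {y}) = {}" using pr(2) by blast
      have "F P (R - {y}) (insert g X \<union> (E - {g} \<union> {y})) Y False"
        using mv.IH[OF a1 a2] pr by simp
      moreover have "insert g X \<union> (E - {g} \<union> {y}) = insert y (X \<union> E)" using gE by blast
      ultimately have "F P (R - {y}) (insert y (X \<union> E)) Y False" by simp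
      then show ?thesis using y by (rule F.mv[rotated])
    qed
  qed
next
  case (op R' X Y)
  note pr = op.prems
  show ?case
  proof (cases "R = {}")
    case True
    have FF: "F P R' X Y False" using op.hyps(1) op.hyps(2) by (rule F.op)
    from F_final[OF FF] obtain E1 E2 where
      e: "E1 \<subseteq> R'" "E2 \<subseteq> R'" "P (X \<union> E1) (Y \<union> E2)" by blast
    have "X \<union> E1 \<subseteq> X \<union> E" using e(1) pr(1) True by blast
    moreover have "finite (X \<union> E)" using pr by simp
    moreover have "finite (Y \<union> E2)" using pr e(2) finite_subset by blast
    ultimately have "P (X \<union> E) Y" using mono[OF e(3)] by blast
    then show ?thesis using True by (simp add: F.fin)
  next
    case ne: False
    have "\<And>g. g \<in> R \<Longrightarrow> F P (R - {g}) (X \<union> E) (insert g Y) True"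
    proof -
      fix g assume g: "g \<in> R"
      have gR: "g \<in> R'" using g pr(1) by blast
      have a1: "R' - {g} = (R - {g}) \<union> E" using pr(1,2) g by blast
      have a2: "(R - {g}) \<inter> E = {}" using pr(2) by blast
      show "F P (R - {g}) (X \<union> E) (insert g Y) True"
        using op.IH[OF gR a1 a2] pr by simp
    qed
    then show ?thesis using ne by (intro F.op)
  qed
qed

lemma F_ins:
  "F P R X Y b \<Longrightarrow> finite Y \<Longrightarrow> (\<And>X' Y'. finite Y' \<Longrightarrow> P X' Y' \<Longrightarrow> P' X' (insert x Y'))
   \<Longrightarrow> F P' R X (insert x Y) b"
proof (induction rule: F.induct)
  case (fin X Y b) then show ?case by (auto intro: F.fin)
next
  case (mv g R X Y) then show ?case by (intro F.mv[of g]) auto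
next
  case (op R X Y)
  have "\<And>g. g \<in> R \<Longrightarrow> F P' (R - {g}) X (insert g (insert x Y)) True"
    using op by (metis finite_insert insert_commute)
  then show ?case using op by (intro F.op) auto
qed


definition pk :: "(nat \<Rightarrow> bool) \<Rightarrow> 'g list \<Rightarrow> 'g set" where
  "pk t h = {h ! i | i. i < length h \<and> t i}"

lemma pk_Nil[simp]: "pk t [] = {}"
  by (simp add: pk_def)

lemma pk_snoc: "pk t (h @ [x]) = (if t (length h) then insert x (pk t h) else pk t h)"
proof (rule set_eqI)
  fix y
  show "y \<in> pk t (h @ [x]) \<longleftrightarrow> y \<in> (if t (length h) then insert x (pk t h) else pk t h)"
  proof
    assume "y \<in> pk t (h @ [x])"
    then obtain i where i: "y = (h @ [x]) ! i" "i < Suc (length h)" "t i" unfolding pk_def by auto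
    show "y \<in> (if t (length h) then insert x (pk t h) else pk t h)"
    proof (cases "i < length h")
      case True
      then have "y = h ! i" using i by (simp add: nth_append)
      then have "y \<in> pk t h" unfolding pk_def using True i(3) by blast
      then show ?thesis by simp
    next
      case False
      then have "i = length h" using i by simp
      then show ?thesis using i by simp
    qed
  next
    assume y: "y \<in> (if t (length h) then insert x (pk t h) else pk t h)"
    show "y \<in> pk t (h @ [x])"
    proof (cases "y \<in> pk t h")
      case True
      then obtain i where i: "y = h ! i" "i < length h" "t i" unfolding pk_def by auto
      then have "y = (h @ [x]) ! i" "i < length (h @ [x])" by (simp_all add: nth_append)
      then show ?thesis unfolding pk_def using i(3) by blast
    next
      case False
      then have "y = x" "t (length h)" using y by (auto split: if_splits)
      then have "y = (h @ [x]) ! length h" "length h < length (h @ [x])" by simp_all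
      then show ?thesis unfolding pk_def using \<open>t (length h)\<close> by blast
    qed
  qed
qed

lemma pk_union: "pk t h \<union> pk (\<lambda>i. \<not> t i) h = set h"
proof (rule set_eqI)
  fix y
  have "y \<in> pk t h \<union> pk (\<lambda>i. \<not> t i) h \<longleftrightarrow> (\<exists>i. y = h ! i \<and> i < length h)"
    unfolding pk_def by blast
  also have "\<dots> \<longleftrightarrow> y \<in> set h" by (metis in_set_conv_nth)
  finally show "y \<in> pk t h \<union> pk (\<lambda>i. \<not> t i) h \<longleftrightarrow> y \<in> set h" .
qed

lemma pk_disj: "distinct h \<Longrightarrow> pk t h \<inter> pk (\<lambda>i. \<not> t i) h = {}"
proof (rule ccontr)
  assume d: "distinct h" and "pk t h \<inter> pk (\<lambda>i. \<not> t i) h \<noteq> {}"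
  then obtain y where "y \<in> pk t h" "y \<in> pk (\<lambda>i. \<not> t i) h" by blast
  then obtain i j where "y = h ! i" "i < length h" "t i" "y = h ! j" "j < length h" "\<not> t j"
    unfolding pk_def by blast
  then show False using d nth_eq_iff_index_eq by metis
qed

lemma pk_finite: "finite (pk t h)"
proof -
  have "pk t h \<subseteq> set h" using pk_union[of t h] by blast
  then show ?thesis using finite_subset by blast
qed

definition strat :: "('g set \<Rightarrow> 'g set \<Rightarrow> bool) \<Rightarrow> 'g set \<Rightarrow> (nat \<Rightarrow> bool) \<Rightarrow> 'g list \<Rightarrow> 'g" where
  "strat P G t h = (if \<exists>g\<in>G - set h. F P (G - set h - {g}) (insert g (pk t h)) (pk (\<lambda>i. \<not> t i) h) False
     then (SOME g. g\<in>G - set h \<and> F P (G - set h - {g}) (insert g (pk t h)) (pk (\<lambda>i. \<not> t i) h) False)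
     else (SOME g. g \<in> G - set h))"

lemma strat_valid: "valid_strategy G t (strat P G t)"
  unfolding valid_strategy_def
proof (intro allI impI)
  fix h assume "distinct h \<and> set h \<subset> G \<and> t (length h)"
  then have ne: "\<exists>g. g \<in> G - set h" by blast
  show "strat P G t h \<in> G - set h"
  proof (cases "\<exists>g\<in>G - set h. F P (G - set h - {g}) (insert g (pk t h)) (pk (\<lambda>i. \<not> t i) h) False")
    case True
    then have "\<exists>g. g\<in>G - set h \<and> F P (G - set h - {g}) (insert g (pk t h)) (pk (\<lambda>i. \<not> t i) h) False" by blast
    from someI_ex[OF this] True show ?thesis unfolding strat_def by simp
  next
    case False
    from someI_ex[OF ne] False show ?thesis unfolding strat_def by simp
  qed
qed

lemma strat_inv:
  assumes cp: "complete_play G p" and fo: "follows t (strat P G t) p"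
    and alt: "\<And>n. t (Suc n) = (\<not> t n)"
    and k0: "k0 \<le> length p"
    and I0: "F P (G - set (take k0 p)) (pk t (take k0 p)) (pk (\<lambda>i. \<not> t i) (take k0 p)) (t k0)"
  shows "P (pk t p) (pk (\<lambda>i. \<not> t i) p)"
proof -
  have dist: "distinct p" and sp: "set p = G" using cp by (auto simp: complete_play_def)
  have "\<forall>k. k0 \<le> k \<and> k \<le> length p \<longrightarrow>
     F P (G - set (take k p)) (pk t (take k p)) (pk (\<lambda>i. \<not> t i) (take k p)) (t k)"
  proof (intro allI impI)
    fix k assume "k0 \<le> k \<and> k \<le> length p"
    then show "F P (G - set (take k p)) (pk t (take k p)) (pk (\<lambda>i. \<not> t i) (take k p)) (t k)"
    proof (induction k)
      case 0 then show ?case using I0 by simp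
    next
      case (Suc k)
      show ?case
      proof (cases "Suc k = k0")
        case True then show ?thesis using I0 by simp
      next
        case False
        then have kk: "k0 \<le> k" "k < length p" using Suc.prems by auto
        define h where "h = take k p"
        define x where "x = p ! k"
        have lh: "length h = k" using kk by (simp add: h_def)
        have tk: "take (Suc k) p = h @ [x]" using kk by (simp add: h_def x_def take_Suc_conv_app_nth)
        have xn: "x \<notin> set h"
        proof
          assume "x \<in> set h"
          then obtain j where j: "j < length h" "h ! j = x" by (metis in_set_conv_nth)
          then have "j < k" "p ! j = p ! k" using kk by (auto simp: h_def x_def)
          then show False using dist kk nth_eq_iff_index_eq by fastforce
        qed
        have xG: "x \<in> G" using sp kk unfolding x_def by auto
        define R where "R = G - set h"
        have xR: "x \<in> R" using xn xG by (simp add: R_def)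
        have Rn: "G - set (take (Suc k) p) = R - {x}" using tk by (auto simp: R_def)
        have Rn': "G - insert x (set h) = R - {x}" by (auto simp: R_def)
        have IH: "F P R (pk t h) (pk (\<lambda>i. \<not> t i) h) (t k)" using Suc.IH kk by (simp add: R_def h_def)
        show ?thesis
        proof (cases "t k")
          case True
          have px: "x = strat P G t h" using fo kk True unfolding follows_def h_def x_def by auto
          have ex: "\<exists>g\<in>G - set h. F P (G - set h - {g}) (insert g (pk t h)) (pk (\<lambda>i. \<not> t i) h) False"
            using F_True[of P R "pk t h" "pk (\<lambda>i. \<not> t i) h"] IH True xR unfolding R_def by auto
          then have "\<exists>g. g\<in>G - set h \<and> F P (G - set h - {g}) (insert g (pk t h)) (pk (\<lambda>i. \<not> t i) h) False" by blast
          from someI_ex[OF this] ex have "F P (R - {x}) (insert x (pk t h)) (pk (\<lambda>i. \<not> t i) h) False"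
            unfolding px strat_def R_def by simp
          then show ?thesis using True alt[of k] by (simp add: tk pk_snoc lh Rn Rn')
        next
          case False
          have "F P (R - {x}) (pk t h) (insert x (pk (\<lambda>i. \<not> t i) h)) True"
            using F_False[of P R "pk t h" "pk (\<lambda>i. \<not> t i) h"] IH False xR by auto
          then show ?thesis using False alt[of k] by (simp add: tk pk_snoc lh Rn Rn')
        qed
      qed
    qed
  qed
  then have "F P (G - set p) (pk t p) (pk (\<lambda>i. \<not> t i) p) (t (length p))" using k0 by (metis order_refl take_all)
  then show ?thesis using sp F_empty by auto
qed


lemma uset_mono: "finite T \<Longrightarrow> S \<subseteq> T \<Longrightarrow> uset u a S \<le> uset u a T"
  unfolding uset_def by (rule sum_mono2) auto

lemma card_split: "finite A \<Longrightarrow> card {a\<in>A. Q a} + card {a\<in>A. \<not> Q a} = card A"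
proof -
  assume fA: "finite A"
  have "A = {a\<in>A. Q a} \<union> {a\<in>A. \<not> Q a}" by blast
  then have "card A = card ({a\<in>A. Q a} \<union> {a\<in>A. \<not> Q a})" by simp
  also have "\<dots> = card {a\<in>A. Q a} + card {a\<in>A. \<not> Q a}"
    using fA by (intro card_Un_disjoint) auto
  finally show ?thesis by simp
qed

lemma lemmaA:
  fixes u :: "'a \<Rightarrow> 'g \<Rightarrow> nat"
  assumes fG: "finite G" and fA: "finite A"
  shows "F (\<lambda>X Y. card A \<le> 2 * card {a\<in>A. uset u a Y \<le> uset u a X}) G {} {} True"
proof (rule ccontr)
  define P where "P = (\<lambda>X Y. card A \<le> 2 * card {a\<in>A. uset u a Y \<le> uset u a X})"
  define Q where "Q = (\<lambda>X Y. card A < 2 * card {a\<in>A. uset u a Y < uset u a X})"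
  assume nF: "\<not> F (\<lambda>X Y. card A \<le> 2 * card {a\<in>A. uset u a Y \<le> uset u a X}) G {} {} True"
  then have nF': "\<not> F P G {} {} True" by (simp add: P_def)
  then have "F (\<lambda>y x. \<not> P x y) G {} {} False" using F_det[OF fG, of P "{}" "{}" True] by simp
  moreover have "\<And>y x. \<not> P x y \<Longrightarrow> Q y x"
  proof -
    fix y x assume "\<not> P x y"
    moreover have "card {a\<in>A. uset u a y \<le> uset u a x} + card {a\<in>A. \<not> uset u a y \<le> uset u a x} = card A"
      using card_split[OF fA] .
    ultimately show "Q y x" unfolding P_def Q_def by (simp add: not_le)
  qed
  ultimately have F2: "F Q G {} {} False" by (rule F_mono)
  have monoQ: "\<And>X Y X' Y'. Q X Y \<Longrightarrow> X \<subseteq> X' \<Longrightarrow> finite X' \<Longrightarrow> Y' \<subseteq> Y \<Longrightarrow> finite Y \<Longrightarrow> Q X' Y'"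
  proof -
    fix X Y X' Y' :: "'g set"
    assume q: "Q X Y" and h: "X \<subseteq> X'" "finite X'" "Y' \<subseteq> Y" "finite Y"
    have "{a\<in>A. uset u a Y < uset u a X} \<subseteq> {a\<in>A. uset u a Y' < uset u a X'}"
    proof (rule Collect_mono, rule impI)
      fix a assume a: "a \<in> A \<and> uset u a Y < uset u a X"
      have "uset u a X \<le> uset u a X'" by (rule uset_mono[OF h(2,1)])
      moreover have "uset u a Y' \<le> uset u a Y" by (rule uset_mono[OF h(4,3)])
      ultimately show "a \<in> A \<and> uset u a Y' < uset u a X'" using a by linarith
    qed
    then have "card {a\<in>A. uset u a Y < uset u a X} \<le> card {a\<in>A. uset u a Y' < uset u a X'}"
      using fA by (intro card_mono) auto
    then show "Q X' Y'" using q unfolding Q_def by linarith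
  qed
  show False
  proof (cases "G = {}")
    case True
    have "P {} {}" unfolding P_def uset_def by simp
    then have "F P G {} {} True" using True by (simp add: F.fin)
    then show False using nF' by simp
  next
    case False
    then obtain x where x: "x \<in> G" by blast
    have "F Q (G - {x}) ({} \<union> {x}) {} False"
    proof (rule F_extra[OF F2, where R="G - {x}" and E="{x}"])
      show "\<And>X Y X' Y'. Q X Y \<Longrightarrow> X \<subseteq> X' \<Longrightarrow> finite X' \<Longrightarrow> Y' \<subseteq> Y \<Longrightarrow> finite Y \<Longrightarrow> Q X' Y'"
        by (rule monoQ)
    qed (use x fG in auto)
    then have F1: "F Q G {} {} True" using x by (intro F.mv[of x]) auto
    obtain X' Y' where qq: "Q X' Y'" "Q Y' X'" using F_combine[OF F1, of Q] F2 by auto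
    have "card {a\<in>A. uset u a Y' < uset u a X'} + card {a\<in>A. uset u a X' < uset u a Y'}
       = card ({a\<in>A. uset u a Y' < uset u a X'} \<union> {a\<in>A. uset u a X' < uset u a Y'})"
      using fA by (intro card_Un_disjoint[symmetric]) auto
    also have "\<dots> \<le> card A" using fA by (intro card_mono) auto
    finally show False using qq unfolding Q_def by linarith
  qed
qed

lemma EF1_MMS:
  fixes u :: "'a \<Rightarrow> 'g \<Rightarrow> nat"
  assumes fG: "finite G" and bin: "\<forall>g. u a g \<le> 1" and XY: "X \<union> Y = G" "X \<inter> Y = {}"
    and ef: "EF1_for u a X Y"
  shows "MMS_fair_for u a G X"
proof -
  obtain C where C: "C \<subseteq> Y" "card C \<le> 1" "uset u a (Y - C) \<le> uset u a X"
    using ef unfolding EF1_for_def by auto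
  have fY: "finite Y" and fX: "finite X" using XY fG by auto
  have fC: "finite C" using C fY finite_subset by blast
  have "uset u a C \<le> card C" unfolding uset_def using bin
    by (metis card_eq_sum sum_mono)
  moreover have "uset u a Y = uset u a (Y - C) + uset u a C"
    unfolding uset_def using fY C(1) by (metis Diff_partition sum.subset_diff)
  ultimately have uY: "uset u a Y \<le> uset u a X + 1" using C by linarith
  have uG: "uset u a G = uset u a X + uset u a Y"
    unfolding uset_def using XY fX fY by (metis sum.union_disjoint)
  define S where "S = {min (uset u a P1) (uset u a P2) | P1 P2. P1 \<union> P2 = G \<and> P1 \<inter> P2 = {}}"
  have bnd: "\<And>m. m \<in> S \<Longrightarrow> m \<le> uset u a X"
  proof -
    fix m assume "m \<in> S"
    then obtain P1 P2 where pp: "P1 \<union> P2 = G" "P1 \<inter> P2 = {}" "m = min (uset u a P1) (uset u a P2)"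
      unfolding S_def by auto
    have "uset u a G = uset u a P1 + uset u a P2"
      unfolding uset_def using pp fG by (metis finite_Un sum.union_disjoint)
    then show "m \<le> uset u a X" using pp uG uY by linarith
  qed
  have "S \<subseteq> {..uset u a X}" using bnd by auto
  then have fS: "finite S" using finite_subset by blast
  have "min (uset u a G) (uset u a {}) \<in> S" unfolding S_def by blast
  then have "S \<noteq> {}" by blast
  then have "Max S \<le> uset u a X" using fS bnd by simp
  then show ?thesis unfolding MMS_fair_for_def MMS_value_def S_def by simp
qed


lemma pb1: "picked_by1 p = pk even p" unfolding picked_by1_def pk_def by simp
lemma pb2: "picked_by2 p = pk odd p" unfolding picked_by2_def pk_def by simp
lemma pk_noodd: "pk (\<lambda>i. \<not> odd i) p = pk even p" unfolding pk_def by simp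
lemma pk_single: "pk t [x] = (if t 0 then {x} else {})"
  using pk_snoc[of t "[]" x] by simp

theorem mainTheorem9:
  fixes G :: "'g set" and A1 A2 :: "'a set" and u :: "'a \<Rightarrow> 'g \<Rightarrow> nat"
  assumes "finite G" and "finite A1" and "finite A2"
    and "binary_agents u A1" and "binary_agents u A2"
  shows "(\<exists>s. valid_strategy G even s \<and>
            (\<forall>p. complete_play G p \<and> follows even s p \<longrightarrow>
               card A1 \<le> 2 * card {a\<in>A1. envy_free_for u a (picked_by1 p) (picked_by2 p)}))
       \<and> (\<exists>s. valid_strategy G odd s \<and>
            (\<forall>p. complete_play G p \<and> follows odd s p \<longrightarrow>
               card A2 \<le> 2 * card {a\<in>A2. EF1_for u a (picked_by2 p) (picked_by1 p)} \<and>
               card A2 \<le> 2 * card {a\<in>A2. MMS_fair_for u a G (picked_by2 p)}))"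
proof (intro conjI)
  note fG = assms(1)
  define P1 where "P1 = (\<lambda>X Y. card A1 \<le> 2 * card {a\<in>A1. uset u a Y \<le> uset u a X})"
  show "\<exists>s. valid_strategy G even s \<and>
            (\<forall>p. complete_play G p \<and> follows even s p \<longrightarrow>
               card A1 \<le> 2 * card {a\<in>A1. envy_free_for u a (picked_by1 p) (picked_by2 p)})"
  proof (intro exI conjI allI impI)
    show "valid_strategy G even (strat P1 G even)" by (rule strat_valid)
    fix p assume h: "complete_play G p \<and> follows even (strat P1 G even) p"
    have I0: "F P1 (G - set (take 0 p)) (pk even (take 0 p)) (pk (\<lambda>i. \<not> even i) (take 0 p)) (even 0)"
      using lemmaA[OF fG assms(2), of u] by (simp add: P1_def)
    have "P1 (pk even p) (pk (\<lambda>i. \<not> even i) p)"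
      using strat_inv[of G p even P1 0] h I0 by auto
    then show "card A1 \<le> 2 * card {a\<in>A1. envy_free_for u a (picked_by1 p) (picked_by2 p)}"
      by (simp add: P1_def pb1 pb2 envy_free_for_def)
  qed
  define P2 where "P2 = (\<lambda>X Y. card A2 \<le> 2 * card {a\<in>A2. EF1_for u a X Y})"
  show "\<exists>s. valid_strategy G odd s \<and>
            (\<forall>p. complete_play G p \<and> follows odd s p \<longrightarrow>
               card A2 \<le> 2 * card {a\<in>A2. EF1_for u a (picked_by2 p) (picked_by1 p)} \<and>
               card A2 \<le> 2 * card {a\<in>A2. MMS_fair_for u a G (picked_by2 p)})"
  proof (intro exI conjI allI impI)
    show "valid_strategy G odd (strat P2 G odd)" by (rule strat_valid)
    fix p assume h: "complete_play G p \<and> follows odd (strat P2 G odd) p"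
    have dist: "distinct p" and sp: "set p = G" using h by (auto simp: complete_play_def)
    have ef: "card A2 \<le> 2 * card {a\<in>A2. EF1_for u a (picked_by2 p) (picked_by1 p)}"
    proof (cases "p = []")
      case True
      have "{a\<in>A2. EF1_for u a (picked_by2 p) (picked_by1 p)} = A2"
        using True by (auto simp: pb1 pb2 EF1_for_def uset_def)
      then show ?thesis by simp
    next
      case False
      then obtain x where x: "take 1 p = [x]" "x \<in> G"
        using sp by (metis One_nat_def hd_in_set take_Suc take_0 list.collapse)
      have FA: "F (\<lambda>X Y. card A2 \<le> 2 * card {a\<in>A2. uset u a Y \<le> uset u a X}) (G - {x}) {} {} True"
        using lemmaA[of "G - {x}" A2 u] fG assms(3) by auto
      have imp: "\<And>X' Y'. finite Y' \<Longrightarrow> card A2 \<le> 2 * card {a\<in>A2. uset u a Y' \<le> uset u a X'}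
          \<Longrightarrow> P2 X' (insert x Y')"
      proof -
        fix X' Y' :: "'g set" assume fy: "finite Y'" and c: "card A2 \<le> 2 * card {a\<in>A2. uset u a Y' \<le> uset u a X'}"
        have "{a\<in>A2. uset u a Y' \<le> uset u a X'} \<subseteq> {a\<in>A2. EF1_for u a X' (insert x Y')}"
        proof safe
          fix a assume "a \<in> A2" "uset u a Y' \<le> uset u a X'"
          moreover have "uset u a (insert x Y' - {x}) \<le> uset u a Y'"
            using fy by (intro uset_mono) auto
          ultimately show "EF1_for u a X' (insert x Y')"
            unfolding EF1_for_def by (intro exI[of _ "{x}"]) auto
        qed
        then have "card {a\<in>A2. uset u a Y' \<le> uset u a X'} \<le> card {a\<in>A2. EF1_for u a X' (insert x Y')}"
          using assms(3) by (intro card_mono) auto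
        then show "P2 X' (insert x Y')" using c unfolding P2_def by linarith
      qed
      have "F P2 (G - {x}) {} (insert x {}) True"
        by (rule F_ins[OF FA]) (auto intro: imp)
      then have I0: "F P2 (G - set (take 1 p)) (pk odd (take 1 p)) (pk (\<lambda>i. \<not> odd i) (take 1 p)) (odd (1::nat))"
        using x by (simp add: pk_single)
      have "P2 (pk odd p) (pk (\<lambda>i. \<not> odd i) p)"
        using strat_inv[of G p odd P2 1] h I0 False by (auto simp: Suc_le_eq)
      then show ?thesis by (simp add: P2_def pb1 pb2 pk_noodd)
    qed
    moreover have "{a\<in>A2. EF1_for u a (picked_by2 p) (picked_by1 p)} \<subseteq> {a\<in>A2. MMS_fair_for u a G (picked_by2 p)}"
    proof safe
      fix a assume a: "a \<in> A2" "EF1_for u a (picked_by2 p) (picked_by1 p)"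
      have "picked_by2 p \<union> picked_by1 p = G"
        using pk_union[of odd p] sp by (simp add: pb1 pb2 pk_noodd)
      moreover have "picked_by2 p \<inter> picked_by1 p = {}"
        using pk_disj[OF dist, of odd] by (simp add: pb1 pb2 pk_noodd)
      ultimately show "MMS_fair_for u a G (picked_by2 p)"
        using EF1_MMS[OF fG _ _ _ a(2)] a(1) assms(5) unfolding binary_agents_def by blast
    qed
    then have "card {a\<in>A2. EF1_for u a (picked_by2 p) (picked_by1 p)} \<le> card {a\<in>A2. MMS_fair_for u a G (picked_by2 p)}"
      using assms(3) by (intro card_mono) auto
    ultimately show "card A2 \<le> 2 * card {a\<in>A2. EF1_for u a (picked_by2 p) (picked_by1 p)}"
      and "card A2 \<le> 2 * card {a\<in>A2. MMS_fair_for u a G (picked_by2 p)}" by linarith+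
  qed
qed

end
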